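(* For each arrival $t\ge 1$ and each level $0\le i\le L^{(t)}+1$, we have $\mathscr{C}^{(t-1)}_{i}\preceq\mathscr{C}^{(t)}_{i}$.
   Context: An offline instance $(\mathcal{M},D)$ consists of demand pairs $D=\{(u_j,v_j)\}$ over a terminal set $V=\{u_j,v_j\}$, each terminal in exactly one pair (the other element of its pair is its mate), and a metric $\mathcal{M}$ on $V$ with all distances at least $1$, viewed as the complete graph on $V$ with edge costs equal to distances. A clustering of $V$ is a partition of $V$; for a clustering $\mathscr{C}$, $\mathcal{M}/\mathscr{C}$ denotes the shortest-path metric on $\mathscr{C}$ of the graph obtained from the complete weighted graph on $V$ by contracting each cluster into a single vertex. For clusterings $\mathscr{C}_1$ of $V_1$ and $\mathscr{C}_2$ of $V_2$, write $\mathscr{C}_1\preceq\mathscr{C}_2$ if every cluster of $\mathscr{C}_1$ is contained in some cluster of $\mathscr{C}_2$. Clustering procedure: ${\sf level}(v)=\lceil\log_2{\sf dist}_{\mathcal{M}}(v,\text{mate of }v)\rceil$, ${\sf level}(C)=\max_{v\in C}{\sf level}(v)$, $L=\max_{v\in V}{\sf level}(v)$. $\mathscr{C}_0$ is the clustering into singletons. For $i=0,\dots,L$: a cluster $C\in\mathscr{C}_i$ is $i$-active if ${\sf level}(C)\ge i$; $H_i$ is the graph whose vertices are the $i$-active clusters of $\mathscr{C}_i$, with an edge between distinct $C_1,C_2$ iff ${\sf dist}_{\mathcal{M}/\mathscr{C}_i}(C_1,C_2)<2^{i+1}$; $\mathscr{C}_{i+1}$ consists of all non-$i$-active clusters of $\mathscr{C}_i$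 together with, for each connected component $Q$ of $H_i$, the union of the clusters in $Q$. Online setting: pairs $(u^{(1)},v^{(1)}),\dots,(u^{(n)},v^{(n)})$ arrive in order; for $1\le t\le n$ the instance $(\mathcal{M}^{(t)},D^{(t)})$ consists of the first $t$ pairs and the restriction of the metric to their terminals $V^{(t)}$. Running the procedure on it yields $L^{(t)}$, $\mathscr{C}^{(t)}_i$, $H^{(t)}_i$; for $i\ge L^{(t)}+1$ set $\mathscr{C}^{(t)}_i:=\mathscr{C}^{(t)}_{L^{(t)}+1}$ and $H^{(t)}_i$ empty. For $t=0$, $L^{(0)}=0$ and every $\mathscr{C}^{(0)}_i$ and $H^{(0)}_i$ is empty. *)

theory Defs
  imports Complex_Main
begin

definition terms :: "('a \<times> 'a) list \<Rightarrow> 'a set" where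
  "terms ps = (\<Union>(u,v)\<in>set ps. {u, v})"

text \<open>Each terminal lies in exactly one pair (all listed terminals are distinct).\<close>
definition valid_pairs :: "('a \<times> 'a) list \<Rightarrow> bool" where
  "valid_pairs ps = distinct (concat (map (\<lambda>(u,v). [u, v]) ps))"

definition metric_on :: "'a set \<Rightarrow> ('a \<Rightarrow> 'a \<Rightarrow> real) \<Rightarrow> bool" where
  "metric_on V d = ((\<forall>x\<in>V. d x x = 0) \<and> (\<forall>x\<in>V. \<forall>y\<in>V. d x y = d y x)
     \<and> (\<forall>x\<in>V. \<forall>y\<in>V. \<forall>z\<in>V. d x z \<le> d x y + d y z)
     \<and> (\<forall>x\<in>V. \<forall>y\<in>V. x \<noteq> y \<longrightarrow> 1 \<le> d x y))"

definition mate :: "('a \<times> 'a) list \<Rightarrow> 'a \<Rightarrow> 'a" where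
  "mate ps x = (SOME y. (x, y) \<in> set ps \<or> (y, x) \<in> set ps)"

definition lvl :: "('a \<times> 'a) list \<Rightarrow> ('a \<Rightarrow> 'a \<Rightarrow> real) \<Rightarrow> 'a \<Rightarrow> int" where
  "lvl ps d v = \<lceil>log 2 (d v (mate ps v))\<rceil>"

definition clvl :: "('a \<times> 'a) list \<Rightarrow> ('a \<Rightarrow> 'a \<Rightarrow> real) \<Rightarrow> 'a set \<Rightarrow> int" where
  "clvl ps d C = Max (lvl ps d ` C)"

definition Lmax :: "('a \<times> 'a) list \<Rightarrow> ('a \<Rightarrow> 'a \<Rightarrow> real) \<Rightarrow> int" where
  "Lmax ps d = Max (lvl ps d ` terms ps)"

text \<open>Weight of the (contracted) edge between two clusters: cheapest edge between them.\<close>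
definition clw :: "('a \<Rightarrow> 'a \<Rightarrow> real) \<Rightarrow> 'a set \<Rightarrow> 'a set \<Rightarrow> real" where
  "clw d X Y = Min {d x y | x y. x \<in> X \<and> y \<in> Y}"

text \<open>Shortest-path metric M/Cl on the clusters of the clustering Cl.\<close>
definition cdist :: "('a \<Rightarrow> 'a \<Rightarrow> real) \<Rightarrow> 'a set set \<Rightarrow> 'a set \<Rightarrow> 'a set \<Rightarrow> real" where
  "cdist d Cl A B = Inf {sum_list (map2 (clw d) (A # ps) (ps @ [B])) | ps. set ps \<subseteq> Cl}"

definition active :: "('a \<times> 'a) list \<Rightarrow> ('a \<Rightarrow> 'a \<Rightarrow> real) \<Rightarrow> nat \<Rightarrow> 'a set \<Rightarrow> bool" where
  "active ps d i C = (clvl ps d C \<ge> int i)"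

definition Hrel :: "('a \<times> 'a) list \<Rightarrow> ('a \<Rightarrow> 'a \<Rightarrow> real) \<Rightarrow> nat \<Rightarrow> 'a set set \<Rightarrow> ('a set \<times> 'a set) set" where
  "Hrel ps d i Cl = {(A, B). A \<in> Cl \<and> B \<in> Cl \<and> active ps d i A \<and> active ps d i B \<and> A \<noteq> B
                      \<and> cdist d Cl A B < (2::real) ^ (i + 1)}"

definition step :: "('a \<times> 'a) list \<Rightarrow> ('a \<Rightarrow> 'a \<Rightarrow> real) \<Rightarrow> nat \<Rightarrow> 'a set set \<Rightarrow> 'a set set" where
  "step ps d i Cl = {C \<in> Cl. \<not> active ps d i C}
     \<union> {\<Union> {C'. C' \<in> Cl \<and> active ps d i C' \<and> (C, C') \<in> (Hrel ps d i Cl)\<^sup>*} | C. C \<in> Cl \<and> active ps d i C}"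

primrec clus :: "('a \<times> 'a) list \<Rightarrow> ('a \<Rightarrow> 'a \<Rightarrow> real) \<Rightarrow> nat \<Rightarrow> 'a set set" where
  "clus ps d 0 = {{v} | v. v \<in> terms ps}"
| "clus ps d (Suc i) = step ps d i (clus ps d i)"

text \<open>Online quantities L^(t) and C^(t)_i for the first t pairs (with the conventions for t = 0
  and for i \<ge> L^(t)+1).\<close>
definition Lon :: "('a \<times> 'a) list \<Rightarrow> ('a \<Rightarrow> 'a \<Rightarrow> real) \<Rightarrow> nat \<Rightarrow> int" where
  "Lon ps d t = (if t = 0 then 0 else Lmax (take t ps) d)"

definition Con :: "('a \<times> 'a) list \<Rightarrow> ('a \<Rightarrow> 'a \<Rightarrow> real) \<Rightarrow> nat \<Rightarrow> nat \<Rightarrow> 'a set set" where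
  "Con ps d t i = (if t = 0 then {}
     else clus (take t ps) d (min i (nat (Lmax (take t ps) d) + 1)))"

definition refines :: "'a set set \<Rightarrow> 'a set set \<Rightarrow> bool" where
  "refines A B = (\<forall>X\<in>A. \<exists>Y\<in>B. X \<subseteq> Y)"

end

theory Submission
  imports Defs
begin

lemma finite_terms: "finite (terms ps)"
  unfolding terms_def by auto

lemma terms_append: "terms (xs @ ys) = terms xs \<union> terms ys"
  unfolding terms_def by auto

lemma terms_take: "terms (take t ps) \<subseteq> terms ps"
  unfolding terms_def by (auto dest: in_set_takeD)

lemma set_concat_pairs: "set (concat (map (\<lambda>(u,v). [u, v]) ps)) = terms ps"
  unfolding terms_def by auto

lemma pair_unique:
  assumes "distinct (concat (map (\<lambda>(u,v). [u, v]) ps))"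
    and "(a,b) \<in> set ps" "(c,e) \<in> set ps" "{a,b} \<inter> {c,e} \<noteq> {}"
  shows "(a,b) = (c,e)"
  using assms
proof (induction ps)
  case Nil then show ?case by simp
next
  case (Cons p rest)
  obtain u v where p: "p = (u,v)" by (cases p)
  have dd: "distinct ([u,v] @ concat (map (\<lambda>(u,v). [u, v]) rest))"
    using Cons.prems(1) p by simp
  have dr: "distinct (concat (map (\<lambda>(u,v). [u, v]) rest))"
    using dd distinct_append by blast
  have "set [u,v] \<inter> set (concat (map (\<lambda>(u,v). [u, v]) rest)) = {}"
    using dd by (simp only: distinct_append)
  then have disj: "{u,v} \<inter> terms rest = {}"
    by (simp only: set_concat_pairs) simp
  have inr: "(x,y) \<in> set rest \<Longrightarrow> x \<in> terms rest \<and> y \<in> terms rest" for x y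
    unfolding terms_def by auto
  show ?case
  proof (cases "(a,b) = p")
    case True
    show ?thesis
    proof (cases "(c,e) = p")
      case True then show ?thesis using \<open>(a,b) = p\<close> by simp
    next
      case False
      then have "(c,e) \<in> set rest" using Cons.prems(3) by auto
      then show ?thesis using inr[of c e] disj True p Cons.prems(4) by auto
    qed
  next
    case False
    then have ab: "(a,b) \<in> set rest" using Cons.prems(2) by auto
    show ?thesis
    proof (cases "(c,e) = p")
      case True
      then show ?thesis using inr[of a b] ab disj p Cons.prems(4) by auto
    next
      case False
      then have "(c,e) \<in> set rest" using Cons.prems(3) by auto
      then show ?thesis using Cons.IH[OF dr ab] Cons.prems(4) by auto
    qed
  qed
qed

lemma mate_eq:
  assumes "valid_pairs (ps1 @ qs)" "v \<in> terms ps1"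
  shows "mate ps1 v = mate (ps1 @ qs) v"
proof -
  let ?P1 = "\<lambda>y. (v, y) \<in> set ps1 \<or> (y, v) \<in> set ps1"
  let ?P2 = "\<lambda>y. (v, y) \<in> set (ps1 @ qs) \<or> (y, v) \<in> set (ps1 @ qs)"
  have dist: "distinct (concat (map (\<lambda>(u,v). [u, v]) (ps1 @ qs)))"
    using assms(1) unfolding valid_pairs_def by simp
  obtain y0 where y0: "?P1 y0" using assms(2) unfolding terms_def by auto
  have uq: "y = y0" if "?P2 y" for y
  proof -
    have "?P2 y0" using y0 by auto
    have h: "\<And>a b c e. (a,b) \<in> set (ps1 @ qs) \<Longrightarrow> (c,e) \<in> set (ps1 @ qs) \<Longrightarrow> {a,b} \<inter> {c,e} \<noteq> {} \<Longrightarrow> a = c \<and> b = e"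
      using pair_unique[OF dist] by blast
    from that \<open>?P2 y0\<close> show ?thesis
    proof (elim disjE)
      assume "(v, y) \<in> set (ps1 @ qs)" "(v, y0) \<in> set (ps1 @ qs)" then show ?thesis using h[of v y v y0] by auto
    next
      assume "(v, y) \<in> set (ps1 @ qs)" "(y0, v) \<in> set (ps1 @ qs)" then show ?thesis using h[of v y y0 v] by auto
    next
      assume "(y, v) \<in> set (ps1 @ qs)" "(v, y0) \<in> set (ps1 @ qs)" then show ?thesis using h[of y v v y0] by auto
    next
      assume "(y, v) \<in> set (ps1 @ qs)" "(y0, v) \<in> set (ps1 @ qs)" then show ?thesis using h[of y v y0 v] by auto
    qed
  qed
  have "?P1 = ?P2"
  proof
    fix y show "?P1 y = ?P2 y"
      using uq[of y] y0 by auto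
  qed
  then show ?thesis unfolding mate_def by simp
qed

lemma lvl_eq:
  assumes "valid_pairs (ps1 @ qs)" "v \<in> terms ps1"
  shows "lvl ps1 d v = lvl (ps1 @ qs) d v"
  unfolding lvl_def using mate_eq[OF assms] by simp

lemma clus_wf: "\<forall>C\<in>clus ps d i. C \<noteq> {} \<and> C \<subseteq> terms ps"
proof (induction i)
  case 0 then show ?case by auto
next
  case (Suc i)
  show ?case
  proof
    fix X assume "X \<in> clus ps d (Suc i)"
    then have "X \<in> step ps d i (clus ps d i)" by simp
    then show "X \<noteq> {} \<and> X \<subseteq> terms ps"
      unfolding step_def using Suc.IH by blast
  qed
qed

lemma step_ref: "refines Cl (step ps d i Cl)"
  unfolding refines_def
proof
  fix C assume C: "C \<in> Cl"
  show "\<exists>Y\<in>step ps d i Cl. C \<subseteq> Y"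
  proof (cases "active ps d i C")
    case False then show ?thesis using C unfolding step_def by blast
  next
    case True
    let ?Y = "\<Union> {C'. C' \<in> Cl \<and> active ps d i C' \<and> (C, C') \<in> (Hrel ps d i Cl)\<^sup>*}"
    have "?Y \<in> step ps d i Cl" using C True unfolding step_def by blast
    moreover have "C \<subseteq> ?Y" using C True by blast
    ultimately show ?thesis by blast
  qed
qed

lemma refines_trans: "refines A B \<Longrightarrow> refines B C \<Longrightarrow> refines A C"
  unfolding refines_def by (meson order_trans)

lemma refines_refl: "refines A A"
  unfolding refines_def by blast

lemma clus_mono: "i \<le> j \<Longrightarrow> refines (clus ps d i) (clus ps d j)"
proof (induction j)
  case 0 then show ?case by (simp add: refines_refl)
next
  case (Suc j)
  show ?case
  proof (cases "i = Suc j")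
    case True then show ?thesis by (simp add: refines_refl)
  next
    case False
    then have "refines (clus ps d i) (clus ps d j)" using Suc by simp
    then show ?thesis using step_ref refines_trans by fastforce
  qed
qed

lemma clw_mono:
  assumes "X \<subseteq> X'" "Y \<subseteq> Y'" "X \<noteq> {}" "Y \<noteq> {}" "finite X'" "finite Y'"
  shows "clw d X' Y' \<le> clw d X Y"
proof -
  have fin: "finite {d x y | x y. x \<in> X' \<and> y \<in> Y'}"
  proof -
    have "{d x y | x y. x \<in> X' \<and> y \<in> Y'} = (\<lambda>(x,y). d x y) ` (X' \<times> Y')" by auto
    then show ?thesis using assms(5,6) by simp
  qed
  show ?thesis unfolding clw_def
    apply (rule Min_antimono)
    using assms fin by blast+
qed

lemma clw_nonneg:
  assumes "X \<noteq> {}" "Y \<noteq> {}" "finite X" "finite Y" "X \<subseteq> V" "Y \<subseteq> V"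
    "\<forall>x\<in>V. \<forall>y\<in>V. 0 \<le> d x y"
  shows "0 \<le> clw d X Y"
proof -
  have fin: "finite {d x y | x y. x \<in> X \<and> y \<in> Y}"
  proof -
    have "{d x y | x y. x \<in> X \<and> y \<in> Y} = (\<lambda>(x,y). d x y) ` (X \<times> Y)" by auto
    then show ?thesis using assms(3,4) by simp
  qed
  have ne: "{d x y | x y. x \<in> X \<and> y \<in> Y} \<noteq> {}" using assms(1,2) by blast
  obtain x y where "x \<in> X" "y \<in> Y" "Min {d x y | x y. x \<in> X \<and> y \<in> Y} = d x y"
    using Min_in[OF fin ne] by blast
  then show ?thesis unfolding clw_def
    using assms(5-7) by auto
qed

lemma sum_map2_mono:
  assumes "\<forall>C\<in>Cl1. f C \<in> Cl2 \<and> C \<subseteq> f C" "\<forall>C\<in>Cl1. C \<noteq> {}"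
    "\<forall>C\<in>Cl2. finite C"
  shows "set xs \<subseteq> Cl1 \<Longrightarrow> set ys \<subseteq> Cl1 \<Longrightarrow>
    sum_list (map2 (clw d) (map f xs) (map f ys)) \<le> sum_list (map2 (clw d) xs ys)"
proof (induction xs arbitrary: ys)
  case Nil then show ?case by simp
next
  case (Cons x xs)
  show ?case
  proof (cases ys)
    case Nil then show ?thesis by simp
  next
    case (Cons y ys')
    have "clw d (f x) (f y) \<le> clw d x y"
      apply (rule clw_mono) using assms Cons.prems \<open>ys = y # ys'\<close> by auto
    moreover have "sum_list (map2 (clw d) (map f xs) (map f ys')) \<le> sum_list (map2 (clw d) xs ys')"
      using Cons.IH[of ys'] Cons.prems \<open>ys = y # ys'\<close> by auto
    ultimately show ?thesis using \<open>ys = y # ys'\<close> by simp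
  qed
qed

lemma sum_map2_nonneg:
  assumes "\<forall>C\<in>Cl2. finite C \<and> C \<subseteq> V \<and> C \<noteq> {}" "\<forall>x\<in>V. \<forall>y\<in>V. 0 \<le> d x y"
    "set xs \<subseteq> Cl2" "set ys \<subseteq> Cl2"
  shows "0 \<le> sum_list (map2 (clw d) xs ys)"
proof (rule sum_list_nonneg)
  fix z assume "z \<in> set (map2 (clw d) xs ys)"
  then obtain a b where ab: "(a,b) \<in> set (zip xs ys)" "z = clw d a b" by auto
  then have "a \<in> Cl2" "b \<in> Cl2" using assms(3,4) by (auto dest: set_zip_leftD set_zip_rightD)
  then show "0 \<le> z" using ab(2) clw_nonneg[of a b V d] assms(1,2) by auto
qed

lemma cdist_mono:
  assumes f: "\<forall>C\<in>Cl1. f C \<in> Cl2 \<and> C \<subseteq> f C" and ne1: "\<forall>C\<in>Cl1. C \<noteq> {}"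
    and c2: "\<forall>C\<in>Cl2. finite C \<and> C \<subseteq> V \<and> C \<noteq> {}" and nn: "\<forall>x\<in>V. \<forall>y\<in>V. 0 \<le> d x y"
    and AB: "A \<in> Cl1" "B \<in> Cl1"
  shows "cdist d Cl2 (f A) (f B) \<le> cdist d Cl1 A B"
  unfolding cdist_def
proof (rule cInf_mono)
  show "{sum_list (map2 (clw d) (A # ps) (ps @ [B])) | ps. set ps \<subseteq> Cl1} \<noteq> {}"
    by (auto intro!: exI[of _ "[]"])
next
  show "bdd_below {sum_list (map2 (clw d) (f A # ps) (ps @ [f B])) | ps. set ps \<subseteq> Cl2}"
    unfolding bdd_below_def
    apply (rule exI[of _ 0])
    using sum_map2_nonneg[OF c2 nn] f AB by auto
next
  fix b assume "b \<in> {sum_list (map2 (clw d) (A # ps) (ps @ [B])) | ps. set ps \<subseteq> Cl1}"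
  then obtain ps where ps: "set ps \<subseteq> Cl1" "b = sum_list (map2 (clw d) (A # ps) (ps @ [B]))" by auto
  have "sum_list (map2 (clw d) (map f (A # ps)) (map f (ps @ [B]))) \<le> b"
    using sum_map2_mono[OF f ne1, where d=d and xs="A # ps" and ys="ps @ [B]"] c2 ps AB by auto
  moreover have "set (map f ps) \<subseteq> Cl2" using ps f by auto
  ultimately show "\<exists>a\<in>{sum_list (map2 (clw d) (f A # ps) (ps @ [f B])) | ps. set ps \<subseteq> Cl2}. a \<le> b"
    by (intro bexI[of _ "sum_list (map2 (clw d) (f A # map f ps) (map f ps @ [f B]))"])
      (auto intro!: exI[of _ "map f ps"])
qed

lemma active_mono:
  assumes "valid_pairs (ps1 @ qs)" "C \<subseteq> D" "C \<noteq> {}" "finite D" "C \<subseteq> terms ps1"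
    "active ps1 d i C"
  shows "active (ps1 @ qs) d i D"
proof -
  have "clvl ps1 d C = Max (lvl (ps1 @ qs) d ` C)"
    unfolding clvl_def using lvl_eq[OF assms(1)] assms(5)
    by (metis (no_types, lifting) image_cong subsetD)
  also have "\<dots> \<le> Max (lvl (ps1 @ qs) d ` D)"
    apply (rule Max_mono) using assms by auto
  finally show ?thesis using assms(6) unfolding active_def clvl_def by simp
qed

lemma clus_pref:
  assumes vp: "valid_pairs (ps1 @ qs)"
    and nn: "\<forall>x\<in>terms (ps1 @ qs). \<forall>y\<in>terms (ps1 @ qs). 0 \<le> d x y"
  shows "refines (clus ps1 d i) (clus (ps1 @ qs) d i)"
proof (induction i)
  case 0
  then show ?case unfolding refines_def using terms_append[of ps1 qs] by auto
next
  case (Suc i)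
  let ?ps2 = "ps1 @ qs"
  let ?Cl1 = "clus ps1 d i" and ?Cl2 = "clus ?ps2 d i"
  obtain f where f: "\<forall>C\<in>?Cl1. f C \<in> ?Cl2 \<and> C \<subseteq> f C"
    using Suc.IH unfolding refines_def by metis
  have w1: "\<forall>C\<in>?Cl1. C \<noteq> {} \<and> C \<subseteq> terms ps1" by (rule clus_wf)
  have w2: "\<forall>C\<in>?Cl2. C \<noteq> {} \<and> C \<subseteq> terms ?ps2" by (rule clus_wf)
  have c2: "\<forall>C\<in>?Cl2. finite C \<and> C \<subseteq> terms ?ps2 \<and> C \<noteq> {}"
    using w2 finite_terms finite_subset by blast
  have ne1: "\<forall>C\<in>?Cl1. C \<noteq> {}" using w1 by blast
  have act: "active ?ps2 d i (f C)" if "C \<in> ?Cl1" "active ps1 d i C" for C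
    apply (rule active_mono[OF vp, of C]) using that f w1 c2 by auto
  have path: "(f C, f C') \<in> (Hrel ?ps2 d i ?Cl2)\<^sup>*"
    if "(C, C') \<in> (Hrel ps1 d i ?Cl1)\<^sup>*" for C C'
    using that
  proof (induction rule: rtrancl_induct)
    case base then show ?case by simp
  next
    case (step y z)
    have yz: "y \<in> ?Cl1" "z \<in> ?Cl1" "active ps1 d i y" "active ps1 d i z"
      "cdist d ?Cl1 y z < 2 ^ (i + 1)"
      using step.hyps(2) unfolding Hrel_def by auto
    show ?case
    proof (cases "f y = f z")
      case True then show ?thesis using step.IH by simp
    next
      case False
      have "cdist d ?Cl2 (f y) (f z) \<le> cdist d ?Cl1 y z"
        by (rule cdist_mono[OF f ne1 c2 nn yz(1,2)])
      then have "(f y, f z) \<in> Hrel ?ps2 d i ?Cl2"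
        unfolding Hrel_def using False yz act f by auto
      then show ?thesis using step.IH by simp
    qed
  qed
  show ?case
    unfolding refines_def
  proof
    fix X assume "X \<in> clus ps1 d (Suc i)"
    then have X: "X \<in> step ps1 d i ?Cl1" by simp
    show "\<exists>Y\<in>clus ?ps2 d (Suc i). X \<subseteq> Y"
    proof (cases "X \<in> ?Cl1 \<and> \<not> active ps1 d i X")
      case True
      then have "f X \<in> ?Cl2" "X \<subseteq> f X" using f by auto
      moreover have "refines ?Cl2 (step ?ps2 d i ?Cl2)" by (rule step_ref)
      ultimately show ?thesis unfolding refines_def by (metis clus.simps(2) order_trans)
    next
      case False
      then obtain C where C: "C \<in> ?Cl1" "active ps1 d i C"
        and Xd: "X = \<Union> {C'. C' \<in> ?Cl1 \<and> active ps1 d i C' \<and> (C, C') \<in> (Hrel ps1 d i ?Cl1)\<^sup>*}"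
        using X unfolding step_def by blast
      let ?Z = "\<Union> {D'. D' \<in> ?Cl2 \<and> active ?ps2 d i D' \<and> (f C, D') \<in> (Hrel ?ps2 d i ?Cl2)\<^sup>*}"
      have "?Z \<in> step ?ps2 d i ?Cl2"
        unfolding step_def using C f act by blast
      moreover have "X \<subseteq> ?Z"
      proof
        fix x assume "x \<in> X"
        then obtain C' where C': "C' \<in> ?Cl1" "active ps1 d i C'"
          "(C, C') \<in> (Hrel ps1 d i ?Cl1)\<^sup>*" "x \<in> C'" using Xd by blast
        then have "f C' \<in> ?Cl2" "active ?ps2 d i (f C')" "(f C, f C') \<in> (Hrel ?ps2 d i ?Cl2)\<^sup>*"
          "x \<in> f C'" using f act path by auto
        then show "x \<in> ?Z" by blast
      qed
      ultimately show ?thesis by auto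
    qed
  qed
qed

theorem lemma4p2:
  fixes ps :: "('a \<times> 'a) list" and d :: "'a \<Rightarrow> 'a \<Rightarrow> real" and t i :: nat
  assumes "valid_pairs ps"
    and "metric_on (terms ps) d"
    and "1 \<le> t" and "t \<le> length ps"
    and "int i \<le> Lon ps d t + 1"
  shows "refines (Con ps d (t - 1) i) (Con ps d t i)"
proof (cases "t = 1")
  case True then show ?thesis unfolding Con_def refines_def by simp
next
  case False
  then have t2: "t \<ge> 2" "t \<noteq> 0" "t - 1 \<noteq> 0" using assms(3) by auto
  define ps1 where "ps1 = take (t - 1) ps"
  define qs where "qs = [ps ! (t - 1)]"
  have eq: "take t ps = ps1 @ qs"
    unfolding ps1_def qs_def using assms(4) t2
    by (metis Suc_diff_1 Suc_le_lessD bot_nat_0.not_eq_extremum diff_less less_one take_Suc_conv_app_nth)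
  have vp: "valid_pairs (ps1 @ qs)"
  proof -
    have "distinct (concat (map (\<lambda>(u,v). [u, v]) (take t ps @ drop t ps)))"
      using assms(1) unfolding valid_pairs_def by simp
    then have "distinct (concat (map (\<lambda>(u,v). [u, v]) (take t ps)))"
      by (simp only: map_append concat_append distinct_append)
    then show ?thesis unfolding valid_pairs_def eq .
  qed
  have nn: "\<forall>x\<in>terms (ps1 @ qs). \<forall>y\<in>terms (ps1 @ qs). 0 \<le> d x y"
  proof (intro ballI)
    fix x y assume "x \<in> terms (ps1 @ qs)" "y \<in> terms (ps1 @ qs)"
    then have "x \<in> terms ps" "y \<in> terms ps" using terms_take[of t ps] eq by auto
    then show "0 \<le> d x y" using assms(2) unfolding metric_on_def
      by (cases "x = y") force+
  qed
  define j1 where "j1 = min i (nat (Lmax ps1 d) + 1)"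
  have i2: "min i (nat (Lmax (take t ps) d) + 1) = i"
    using assms(5) t2 unfolding Lon_def by auto
  have c1: "Con ps d (t - 1) i = clus ps1 d j1"
    unfolding Con_def j1_def ps1_def using t2 by simp
  have c2: "Con ps d t i = clus (ps1 @ qs) d i"
    unfolding Con_def using t2 i2 eq by simp
  have "refines (clus ps1 d j1) (clus (ps1 @ qs) d j1)" by (rule clus_pref[OF vp nn])
  moreover have "refines (clus (ps1 @ qs) d j1) (clus (ps1 @ qs) d i)"
    by (rule clus_mono) (simp add: j1_def)
  ultimately show ?thesis using c1 c2 refines_trans by metis
qed


end
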